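(* Let $n$ be a positive integer, let $a_n$ be an integer, and let $x$ be a nonzero real or complex number. Then \[ \left(\frac{x-1}{x}\right)^n\sum_{a_{n-1}=1}^{a_n}\sum_{a_{n-2}=1}^{a_{n-1}}\cdots\sum_{a_0=1}^{a_1}x^{a_0} = x^{a_n}-\sum_{j=0}^{n-1}\left(\frac{x-1}{x}\right)^j\binom{a_n+j-1}{j}. \]
   Context: For integers $c,m$ and a function $f$ on the integers, $\sum_{k=c}^m f(k)$ denotes the usual sum if $m\ge c$, equals $0$ if $m=c-1$, and equals $-\sum_{k=m+1}^{c-1}f(k)$ if $m\le c-2$. The nested sum $\sum_{a_{n-1}=c}^{a_n}\sum_{a_{n-2}=c}^{a_{n-1}}\cdots\sum_{a_0=c}^{a_1}g(a_0)$ is the iterated sum ($n$ summation signs): innermost over $a_0$ from $c$ to $a_1$, then over $a_1$ from $c$ to $a_2$, ..., outermost over $a_{n-1}$ from $c$ to $a_n$. For an integer $j\ge0$ and any number $y$, $\binom{y}{j}=y(y-1)\cdots(y-j+1)/j!$. *)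

theory Defs
  imports Complex_Main
begin

definition isum :: "int \<Rightarrow> int \<Rightarrow> (int \<Rightarrow> 'a::ab_group_add) \<Rightarrow> 'a" where
  "isum c m f = (if m \<ge> c then (\<Sum>k\<in>{c..m}. f k)
                 else if m = c - 1 then 0
                 else - (\<Sum>k\<in>{m+1..c-1}. f k))"

text \<open>Iterated sum with n summation signs: nested_sum c n g a_n =
  sum over a_{n-1} from c to a_n ... sum over a_0 from c to a_1 of g a_0.\<close>
fun nested_sum :: "int \<Rightarrow> nat \<Rightarrow> (int \<Rightarrow> 'a::ab_group_add) \<Rightarrow> int \<Rightarrow> 'a" where
  "nested_sum c 0 g a = g a"
| "nested_sum c (Suc k) g a = isum c a (\<lambda>b. nested_sum c k g b)"

end

theory Submission
  imports Defs
begin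

lemma tele:
  fixes G :: "int \<Rightarrow> 'a::ab_group_add"
  assumes d: "\<And>k. G k - G (k - 1) = f k" and m: "m \<ge> c - 1"
  shows "(\<Sum>k\<in>{c..m}. f k) = G m - G (c - 1)"
  using m
proof (induction m rule: int_ge_induct)
  case base
  then show ?case by simp
next
  case (step i)
  have "{c..i+1} = insert (i+1) {c..i}" using step.hyps by auto
  then have "(\<Sum>k\<in>{c..i+1}. f k) = f (i+1) + (\<Sum>k\<in>{c..i}. f k)" by simp
  also have "\<dots> = G (i+1) - G (c - 1)" using step.IH d[of "i+1"] by (simp add: algebra_simps)
  finally show ?case .
qed

lemma isum_tele:
  fixes G :: "int \<Rightarrow> 'a::ab_group_add"
  assumes d: "\<And>k. G k - G (k - 1) = f k"
  shows "isum c m f = G m - G (c - 1)"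
proof -
  consider "m \<ge> c" | "m = c - 1" | "m < c - 1" by linarith
  then show ?thesis
  proof cases
    case 1 then show ?thesis unfolding isum_def using tele[of G f c m, OF d] by simp
  next
    case 2 then show ?thesis unfolding isum_def by simp
  next
    case 3
    have "(\<Sum>k\<in>{m+1..c-1}. f k) = G (c-1) - G (m+1-1)"
      using tele[of G f "m+1" "c-1", OF d] 3 by simp
    then show ?thesis unfolding isum_def using 3 by simp
  qed
qed

lemma gch_zero: "j \<ge> 1 \<Longrightarrow> ((of_int (int j - 1) :: 'a::field_char_0) gchoose j) = 0"
proof -
  assume "j \<ge> 1"
  then obtain i where j: "j = Suc i" by (cases j) auto
  have "(of_int (int j - 1) :: 'a) = of_nat i" using j by simp
  then show ?thesis using j by (simp add: binomial_gbinomial[symmetric] binomial_eq_0)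
qed

lemma main:
  fixes x :: "'a::real_normed_field"
  assumes "x \<noteq> 0"
  shows "((x - 1) / x) ^ n * nested_sum 1 n (\<lambda>a0. x powi a0) a
         = x powi a - (\<Sum>j<n. ((x - 1) / x) ^ j * ((of_int (a + int j - 1) :: 'a) gchoose j))"
proof (induction n arbitrary: a)
  case 0
  then show ?case by simp
next
  case (Suc n)
  define y where "y = (x - 1) / x"
  define S where "S n a = (\<Sum>j<n. y ^ j * ((of_int (a + int j - 1) :: 'a) gchoose j))" for n a
  have IH: "y ^ n * nested_sum 1 n (\<lambda>a0. x powi a0) b = x powi b - S n b" for b
    using Suc.IH unfolding y_def S_def by simp
  define G where "G a = x powi a - S (Suc n) a" for a
  have lin: "c * isum 1 a f = isum 1 a (\<lambda>k. c * f k)" for c :: 'a and f :: "int \<Rightarrow> 'a"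
    unfolding isum_def by (simp add: sum_distrib_left)
  have pw: "x powi k - x powi (k - 1) = y * x powi k" for k
  proof -
    have "x powi k = x powi (k - 1) * x" using power_int_add_1[of x "k - 1"] assms by simp
    then show ?thesis unfolding y_def using assms by (simp add: field_simps)
  qed
  have pas: "((of_int (k + int j) :: 'a) gchoose (Suc j)) - ((of_int (k - 1 + int j) :: 'a) gchoose (Suc j))
     = (of_int (k - 1 + int j) :: 'a) gchoose j" for k j
  proof -
    have e: "(of_int (k + int j) :: 'a) = of_int (k - 1 + int j) + 1" by simp
    show ?thesis unfolding e gbinomial_Suc_Suc by simp
  qed
  have dS: "S (Suc n) k - S (Suc n) (k - 1) = y * S n k" for k
  proof -
    have "S (Suc n) k - S (Suc n) (k - 1) =
      (\<Sum>j<Suc n. y ^ j * (((of_int (k + int j - 1) :: 'a) gchoose j) - ((of_int (k - 1 + int j - 1) :: 'a) gchoose j)))"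
      unfolding S_def by (simp add: sum_subtractf algebra_simps)
    also have "\<dots> = (\<Sum>j<n. y ^ Suc j * (((of_int (k + int (Suc j) - 1) :: 'a) gchoose Suc j) - ((of_int (k - 1 + int (Suc j) - 1) :: 'a) gchoose Suc j)))"
      by (subst sum.lessThan_Suc_shift) simp
    also have "\<dots> = (\<Sum>j<n. y ^ Suc j * ((of_int (k + int j - 1) :: 'a) gchoose j))"
    proof (rule sum.cong[OF refl])
      fix j
      have "k + int (Suc j) - 1 = k + int j" "k - 1 + int (Suc j) - 1 = k - 1 + int j"
           "k + int j - 1 = k - 1 + int j" by simp_all
      then show "y ^ Suc j * (((of_int (k + int (Suc j) - 1) :: 'a) gchoose Suc j) - ((of_int (k - 1 + int (Suc j) - 1) :: 'a) gchoose Suc j)) = y ^ Suc j * ((of_int (k + int j - 1) :: 'a) gchoose j)"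
        by (simp only: pas)
    qed
    also have "\<dots> = y * S n k" unfolding S_def by (simp add: sum_distrib_left mult.assoc)
    finally show ?thesis .
  qed
  have dG: "G k - G (k - 1) = y * (x powi k - S n k)" for k
    unfolding G_def using pw[of k] dS[of k] by (simp add: algebra_simps)
  have G0: "G (1 - 1) = 0"
  proof -
    have "S (Suc n) 0 = (\<Sum>j<Suc n. y ^ j * ((of_int (int j - 1) :: 'a) gchoose j))"
      unfolding S_def by simp
    also have "\<dots> = 1"
      by (subst sum.lessThan_Suc_shift) (simp add: binomial_gbinomial[symmetric] binomial_eq_0)
    finally show ?thesis unfolding G_def by simp
  qed
  have "y ^ Suc n * nested_sum 1 (Suc n) (\<lambda>a0. x powi a0) a
      = y * isum 1 a (\<lambda>b. y ^ n * nested_sum 1 n (\<lambda>a0. x powi a0) b)"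
    using lin[of "y ^ n" "nested_sum 1 n (\<lambda>a0. x powi a0)"] by (simp add: mult.assoc)
  also have "\<dots> = isum 1 a (\<lambda>b. y * (x powi b - S n b))" unfolding IH lin ..
  also have "\<dots> = G a" using isum_tele[of G "\<lambda>b. y * (x powi b - S n b)" 1 a, OF dG] G0 by simp
  finally show ?case unfolding G_def S_def y_def .
qed

theorem lemma2:
  fixes n :: nat and an :: int and x :: "'a::real_normed_field"
  assumes "n \<ge> 1" and "x \<noteq> 0"
  shows "((x - 1) / x) ^ n * nested_sum 1 n (\<lambda>a0. x powi a0) an
         = x powi an - (\<Sum>j<n. ((x - 1) / x) ^ j * ((of_int (an + int j - 1) :: 'a) gchoose j))"
  using main[OF assms(2)] .

end
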